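(* Let $P$ be a property of families of metric spaces that is inherited by subsets. Let $(I,\le)$ be a linearly ordered set and $(f_i:X_i\to Y_i)_{i\in I}$ an asymptotically faithful family of surjective maps between metric spaces such that the family $(X_i)_{i\in I}$ has property $P$. Then $(Y_i)_{i\in I}$ has property $P$ piecewise.
   Context: A property of families of metric spaces is invariant under isometries of members. $P$ is inherited by subsets if whenever a family $\mathcal{Y}$ has $P$, so does $\{A: A\subseteq Y\text{ for some }Y\in\mathcal{Y}\}$ (with restricted metrics). A family of surjections $(f_i:X_i\to Y_i)_{i\in I}$ is asymptotically faithful if for every $R\in\mathbb{N}$ there is $j\in I$ such that for all $i\ge j$ and $x\in X_i$ the restriction $f_i:B(x,R)\to B(f_i(x),R)$ is an isometry (onto). A family $(Y_i)_{i\in I}$ has property $P$ piecewise if for every $R\in\mathbb{N}$ there is $j(R)\in I$ such that the family $\bigcup_{R\in\mathbb{N}}\{A:A\subseteq Y_i\text{ for some }i\ge j(R),\ \operatorname{diam}A\le R\}$ has property $P$. *)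

theory Defs
  imports "HOL-Analysis.Analysis"
begin

definition isometric_spaces :: "'a metric \<Rightarrow> 'b metric \<Rightarrow> bool" where
  "isometric_spaces M N \<longleftrightarrow>
     (\<exists>g. bij_betw g (mspace M) (mspace N) \<and>
          (\<forall>x\<in>mspace M. \<forall>y\<in>mspace M. mdist N (g x) (g y) = mdist M x y))"

definition iso_families :: "'a metric set \<Rightarrow> 'b metric set \<Rightarrow> bool" where
  "iso_families F G \<longleftrightarrow>
     (\<forall>M\<in>F. \<exists>N\<in>G. isometric_spaces M N) \<and> (\<forall>N\<in>G. \<exists>M\<in>F. isometric_spaces M N)"

text \<open>A property of families, given by its instances P on spaces with points of
  type 'a and Q on spaces with points of type 'b, is invariant under isometries
  of members.\<close>
definition isometry_invariant ::
  "('a metric set \<Rightarrow> bool) \<Rightarrow> ('b metric set \<Rightarrow> bool) \<Rightarrow> bool" where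
  "isometry_invariant P Q \<longleftrightarrow>
     (\<forall>F G. iso_families F G \<longrightarrow> (P F \<longleftrightarrow> Q G))"

definition inherited_by_subsets :: "('a metric set \<Rightarrow> bool) \<Rightarrow> bool" where
  "inherited_by_subsets P \<longleftrightarrow>
     (\<forall>F \<A>. P F \<longrightarrow>
        (\<forall>A\<in>\<A>. \<exists>Y\<in>F. \<exists>S. S \<subseteq> mspace Y \<and> A = submetric Y S) \<longrightarrow> P \<A>)"

definition ball_isometry :: "'a metric \<Rightarrow> 'b metric \<Rightarrow> ('a \<Rightarrow> 'b) \<Rightarrow> 'a \<Rightarrow> real \<Rightarrow> bool" where
  "ball_isometry X Y f x R \<longleftrightarrow>
     bij_betw f (mcball_of X x R) (mcball_of Y (f x) R) \<and>
     (\<forall>u\<in>mcball_of X x R. \<forall>v\<in>mcball_of X x R. mdist Y (f u) (f v) = mdist X u v)"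

definition asymptotically_faithful ::
  "('i::linorder) set \<Rightarrow> ('i \<Rightarrow> 'a metric) \<Rightarrow> ('i \<Rightarrow> 'b metric) \<Rightarrow> ('i \<Rightarrow> 'a \<Rightarrow> 'b) \<Rightarrow> bool" where
  "asymptotically_faithful I X Y f \<longleftrightarrow>
     (\<forall>R::nat. \<exists>j\<in>I. \<forall>i\<in>I. j \<le> i \<longrightarrow>
        (\<forall>x\<in>mspace (X i). ball_isometry (X i) (Y i) (f i) x (real R)))"

definition diam_le :: "'a metric \<Rightarrow> 'a set \<Rightarrow> real \<Rightarrow> bool" where
  "diam_le M A R \<longleftrightarrow> (\<forall>x\<in>A. \<forall>y\<in>A. mdist M x y \<le> R)"

definition has_property_piecewise ::
  "('b metric set \<Rightarrow> bool) \<Rightarrow> ('i::linorder) set \<Rightarrow> ('i \<Rightarrow> 'b metric) \<Rightarrow> bool" where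
  "has_property_piecewise Q I Y \<longleftrightarrow>
     (\<exists>j::nat \<Rightarrow> 'i. (\<forall>R. j R \<in> I) \<and>
        Q (\<Union>R::nat. {submetric (Y i) A | i A.
              i \<in> I \<and> j R \<le> i \<and> A \<subseteq> mspace (Y i) \<and> diam_le (Y i) A (real R)}))"

end

theory Submission
  imports Defs
begin

lemma key:
  assumes surj: "f ` mspace X = mspace Y"
    and bi: "\<forall>x\<in>mspace X. ball_isometry X Y f x R"
    and A: "A \<subseteq> mspace Y" and d: "diam_le Y A R"
  shows "\<exists>S \<subseteq> mspace X. isometric_spaces (submetric X S) (submetric Y A)"
proof (cases "A = {}")
  case True
  then show ?thesis unfolding isometric_spaces_def
    by (intro exI[of _ "{}"]) (auto intro!: exI[of _ f] simp: bij_betw_def)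
next
  case False
  then obtain y where y: "y \<in> A" by auto
  then obtain x where x: "x \<in> mspace X" "f x = y" using A surj by force
  have b: "bij_betw f (mcball_of X x R) (mcball_of Y y R)"
    and di: "\<forall>u\<in>mcball_of X x R. \<forall>v\<in>mcball_of X x R. mdist Y (f u) (f v) = mdist X u v"
    using bi x unfolding ball_isometry_def by auto
  have AD: "A \<subseteq> mcball_of Y y R" using A d y unfolding diam_le_def by auto
  define S where "S = mcball_of X x R \<inter> f -` A"
  have SC: "S \<subseteq> mcball_of X x R" by (auto simp: S_def)
  have fS: "f ` S = A"
  proof
    show "f ` S \<subseteq> A" by (auto simp: S_def)
    show "A \<subseteq> f ` S"
    proof
      fix a assume "a \<in> A"
      then have "a \<in> f ` mcball_of X x R" using AD b by (auto simp: bij_betw_def)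
      then show "a \<in> f ` S" using \<open>a \<in> A\<close> by (auto simp: S_def)
    qed
  qed
  have bS: "bij_betw f S A" using bij_betw_subset[OF b SC fS] .
  have SX: "S \<subseteq> mspace X" using SC by auto
  show ?thesis
    unfolding isometric_spaces_def
    apply (intro exI[of _ S] conjI SX exI[of _ f])
    using bS SX A SC di by (auto simp: Int_absorb2 subset_iff)
qed

theorem lemma6p5:
  fixes P :: "'a metric set \<Rightarrow> bool" and Q :: "'b metric set \<Rightarrow> bool"
    and I :: "'i::linorder set"
    and X :: "'i \<Rightarrow> 'a metric" and Y :: "'i \<Rightarrow> 'b metric" and f :: "'i \<Rightarrow> 'a \<Rightarrow> 'b"
  assumes "isometry_invariant P P" and "isometry_invariant Q Q"
    and "isometry_invariant P Q"
    and "inherited_by_subsets P" and "inherited_by_subsets Q"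
    and "\<And>i. i \<in> I \<Longrightarrow> f i \<in> mspace (X i) \<rightarrow> mspace (Y i)"
    and "\<And>i. i \<in> I \<Longrightarrow> f i ` mspace (X i) = mspace (Y i)"
    and "asymptotically_faithful I X Y f"
    and "P (X ` I)"
  shows "has_property_piecewise Q I Y"
proof -
  have "\<forall>R::nat. \<exists>j\<in>I. \<forall>i\<in>I. j \<le> i \<longrightarrow>
        (\<forall>x\<in>mspace (X i). ball_isometry (X i) (Y i) (f i) x (real R))"
    using assms(8) unfolding asymptotically_faithful_def by blast
  then obtain j where jI: "\<And>R. j R \<in> I" and jb: "\<And>R i x. i \<in> I \<Longrightarrow> j R \<le> i \<Longrightarrow>
      x \<in> mspace (X i) \<Longrightarrow> ball_isometry (X i) (Y i) (f i) x (real R)"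
    by metis
  define F where "F = (\<Union>R::nat. {submetric (Y i) A | i A.
              i \<in> I \<and> j R \<le> i \<and> A \<subseteq> mspace (Y i) \<and> diam_le (Y i) A (real R)})"
  define G where "G = {M. (\<exists>N\<in>F. isometric_spaces M N) \<and>
      (\<exists>i\<in>I. \<exists>S. S \<subseteq> mspace (X i) \<and> M = submetric (X i) S)}"
  have PG: "P G"
  proof -
    have "\<forall>A\<in>G. \<exists>Y\<in>X ` I. \<exists>S. S \<subseteq> mspace Y \<and> A = submetric Y S"
      unfolding G_def by blast
    then show ?thesis using assms(4) assms(9) unfolding inherited_by_subsets_def by blast
  qed
  have "\<exists>M\<in>G. isometric_spaces M N" if "N \<in> F" for N
  proof -
    from that obtain R i A where N: "N = submetric (Y i) A" and i: "i \<in> I" "j R \<le> i"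
      and A: "A \<subseteq> mspace (Y i)" "diam_le (Y i) A (real R)"
      unfolding F_def by blast
    obtain S where S: "S \<subseteq> mspace (X i)" "isometric_spaces (submetric (X i) S) (submetric (Y i) A)"
      using key[where R="real R", OF assms(7)[OF i(1)] _ A] jb[OF i] by blast
    then show ?thesis using that i N unfolding G_def by blast
  qed
  then have "iso_families G F" unfolding iso_families_def G_def by blast
  then have "Q F" using assms(3) PG unfolding isometry_invariant_def by blast
  then show ?thesis unfolding has_property_piecewise_def F_def using jI by blast
qed

end
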